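(* Let $f:D^n\to\mathbb{R}^d$ have finite global sensitivity $GS_f>0$, let $T\in\mathbb{R}$, and let $U=\{x\in D^n: LS_f(x)>T\}$, assumed nonempty. For $x\in D^n$ let $ud(x)=\min_{y\in U}d(y,x)$. Let $\beta>0$ satisfy $$\beta\le\min_{x\notin U}\frac{1}{ud(x)}\ln\Big(\frac{GS_f}{LS_f(x)}\Big)$$ (with the convention $\ln(GS_f/0)=+\infty$). Then $S(x)=GS_f\cdot e^{-\beta\cdot ud(x)}$ is a $\beta$-smooth upper bound on the local sensitivity of $f$.
   Context: $D^n$ denotes the set of datasets consisting of $n$ elements; Hamming distance $d(x,y)=|\{i:x_i\neq y_i\}|$; neighbors satisfy $d(x,y)=1$. Global sensitivity: $GS_f=\max_{x,y:d(x,y)=1}\|f(x)-f(y)\|_1$. Local sensitivity: $LS_f(x)=\max_{y:d(x,y)=1}\|f(x)-f(y)\|_1$. For $\beta>0$, $S:D^n\to\mathbb{R}$ is a $\beta$-smooth upper bound on the local sensitivity of $f$ if $S(x)\ge LS_f(x)$ for all $x$ and $S(x)\le e^{\beta}S(y)$ for all $x,y$ with $d(x,y)=1$. *)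

theory Defs
  imports "HOL-Analysis.Analysis"
begin

definition datasets :: "nat \<Rightarrow> 'a list set" where
  "datasets n = {x. length x = n}"

text \<open>Hamming distance (for lists of equal length).\<close>
definition hamming :: "'a list \<Rightarrow> 'a list \<Rightarrow> nat" where
  "hamming x y = card {i. i < length x \<and> x ! i \<noteq> y ! i}"

definition l1dist :: "real ^ 'd \<Rightarrow> real ^ 'd \<Rightarrow> real" where
  "l1dist u v = (\<Sum>i\<in>UNIV. \<bar>u $ i - v $ i\<bar>)"

text \<open>Global sensitivity (supremum over neighbouring pairs; 0 if there are none).\<close>
definition GS :: "nat \<Rightarrow> ('a list \<Rightarrow> real ^ 'd) \<Rightarrow> real" where
  "GS n f = Sup (insert 0 {l1dist (f x) (f y) | x y.
      x \<in> datasets n \<and> y \<in> datasets n \<and> hamming x y = 1})"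

text \<open>Local sensitivity at x (supremum over neighbours; 0 if there are none).\<close>
definition LS :: "nat \<Rightarrow> ('a list \<Rightarrow> real ^ 'd) \<Rightarrow> 'a list \<Rightarrow> real" where
  "LS n f x = Sup (insert 0 {l1dist (f x) (f y) | y.
      y \<in> datasets n \<and> hamming x y = 1})"

definition finite_GS :: "nat \<Rightarrow> ('a list \<Rightarrow> real ^ 'd) \<Rightarrow> bool" where
  "finite_GS n f = bdd_above {l1dist (f x) (f y) | x y.
      x \<in> datasets n \<and> y \<in> datasets n \<and> hamming x y = 1}"

definition smooth_upper_bound ::
  "nat \<Rightarrow> real \<Rightarrow> ('a list \<Rightarrow> real ^ 'd) \<Rightarrow> ('a list \<Rightarrow> real) \<Rightarrow> bool" where
  "smooth_upper_bound n \<beta> f S \<longleftrightarrow>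
     (\<forall>x\<in>datasets n. S x \<ge> LS n f x) \<and>
     (\<forall>x\<in>datasets n. \<forall>y\<in>datasets n. hamming x y = 1 \<longrightarrow> S x \<le> exp \<beta> * S y)"

definition ud :: "'a list set \<Rightarrow> 'a list \<Rightarrow> nat" where
  "ud U x = Min ((\<lambda>y. hamming y x) ` U)"

end

theory Submission
  imports Defs
begin

lemma hamming_le: "hamming y x \<le> length y"
proof -
  have "{i. i < length y \<and> y ! i \<noteq> x ! i} \<subseteq> {..<length y}" by auto
  then show ?thesis unfolding hamming_def by (metis card_lessThan card_mono finite_lessThan)
qed

lemma hamming_sym: "length x = length y \<Longrightarrow> hamming x y = hamming y x"
proof -
  assume "length x = length y"
  then have "{i. i < length x \<and> x ! i \<noteq> y ! i} = {i. i < length y \<and> y ! i \<noteq> x ! i}" by auto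
  then show ?thesis unfolding hamming_def by simp
qed

lemma hamming_zero: "length x = length y \<Longrightarrow> hamming x y = 0 \<Longrightarrow> x = y"
  unfolding hamming_def
  by (auto intro: nth_equalityI)

lemma hamming_tri:
  assumes "length x = length y" "length z = length x"
  shows "hamming z y \<le> hamming z x + hamming x y"
proof -
  have "{i. i < length z \<and> z ! i \<noteq> y ! i} \<subseteq>
        {i. i < length z \<and> z ! i \<noteq> x ! i} \<union> {i. i < length x \<and> x ! i \<noteq> y ! i}"
    using assms by auto
  then have "card {i. i < length z \<and> z ! i \<noteq> y ! i} \<le>
        card ({i. i < length z \<and> z ! i \<noteq> x ! i} \<union> {i. i < length x \<and> x ! i \<noteq> y ! i})"
    by (intro card_mono) auto
  also have "\<dots> \<le> card {i. i < length z \<and> z ! i \<noteq> x ! i} + card {i. i < length x \<and> x ! i \<noteq> y ! i}"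
    by (rule card_Un_le)
  finally show ?thesis unfolding hamming_def .
qed

lemma ud_fin:
  assumes "U \<subseteq> datasets n"
  shows "finite ((\<lambda>y. hamming y x) ` U)"
proof -
  have "(\<lambda>y. hamming y x) ` U \<subseteq> {..n}"
    using assms hamming_le unfolding datasets_def by fastforce
  then show ?thesis using finite_subset by blast
qed

lemma ud_le:
  assumes "U \<subseteq> datasets n" "y \<in> U"
  shows "ud U x \<le> hamming y x"
  unfolding ud_def using ud_fin[OF assms(1)] assms(2) by simp

lemma ud_in:
  assumes "U \<subseteq> datasets n" "U \<noteq> {}"
  shows "\<exists>y\<in>U. ud U x = hamming y x"
proof -
  have "ud U x \<in> (\<lambda>y. hamming y x) ` U"
    unfolding ud_def using ud_fin[OF assms(1)] assms(2) by (intro Min_in) auto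
  then show ?thesis by auto
qed

theorem theorem5:
  fixes n :: nat and f :: "'a list \<Rightarrow> real ^ 'd" and T \<beta> :: real and U :: "'a list set"
  assumes finGS: "finite_GS n f"
    and GSpos: "GS n f > 0"
    and U_def: "U = {x \<in> datasets n. LS n f x > T}"
    and U_ne: "U \<noteq> {}"
    and beta_pos: "\<beta> > 0"
    and beta_le: "\<forall>x\<in>datasets n - U. LS n f x \<noteq> 0 \<longrightarrow>
                    \<beta> \<le> ln (GS n f / LS n f x) / real (ud U x)"
  shows "smooth_upper_bound n \<beta> f (\<lambda>x. GS n f * exp (- \<beta> * real (ud U x)))"
proof -
  let ?A = "{l1dist (f x) (f y) | x y. x \<in> datasets n \<and> y \<in> datasets n \<and> hamming x y = 1}"
  have Usub: "U \<subseteq> datasets n" using U_def by auto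
  have bddA: "bdd_above (insert 0 ?A)" using finGS unfolding finite_GS_def by simp
  have LS_le: "LS n f x \<le> GS n f" if x: "x \<in> datasets n" for x
    unfolding LS_def GS_def
    by (rule cSup_subset_mono) (use x bddA in auto)
  have LS_ge: "LS n f x \<ge> 0" if x: "x \<in> datasets n" for x
  proof -
    have "bdd_above (insert 0 {l1dist (f x) (f y) | y. y \<in> datasets n \<and> hamming x y = 1})"
      by (rule bdd_above_mono[OF bddA]) (use x in auto)
    then show ?thesis unfolding LS_def by (intro cSup_upper) auto
  qed
  have ud_U: "ud U x = 0" if "x \<in> U" for x
    using ud_le[OF Usub that, of x] unfolding hamming_def by simp
  have ud_pos: "ud U x \<ge> 1" if "x \<in> datasets n" "x \<notin> U" for x
  proof (rule ccontr)
    assume "\<not> ud U x \<ge> 1"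
    then have "ud U x = 0" by simp
    obtain y where y: "y \<in> U" "ud U x = hamming y x" using ud_in[OF Usub U_ne] by blast
    have "y = x" using y Usub that \<open>ud U x = 0\<close> unfolding datasets_def
      by (intro hamming_zero) auto
    then show False using y that by simp
  qed
  have part1: "GS n f * exp (- \<beta> * real (ud U x)) \<ge> LS n f x" if x: "x \<in> datasets n" for x
  proof (cases "x \<in> U")
    case True then show ?thesis using ud_U LS_le x by simp
  next
    case False
    show ?thesis
    proof (cases "LS n f x = 0")
      case True then show ?thesis using GSpos by simp
    next
      case F: False
      have lpos: "LS n f x > 0" using LS_ge[OF x] F by simp
      have u: "real (ud U x) > 0" using ud_pos[OF x False] by simp
      have "\<beta> \<le> ln (GS n f / LS n f x) / real (ud U x)" using beta_le x False F by auto
      then have "\<beta> * real (ud U x) \<le> ln (GS n f / LS n f x)" using u by (simp add: pos_le_divide_eq)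
      then have "exp (\<beta> * real (ud U x)) \<le> GS n f / LS n f x"
        using GSpos lpos by (metis divide_pos_pos exp_le_cancel_iff exp_ln)
      then have "LS n f x * exp (\<beta> * real (ud U x)) \<le> GS n f"
        using lpos by (simp add: le_divide_eq mult.commute)
      then have "LS n f x \<le> GS n f / exp (\<beta> * real (ud U x))"
        by (simp add: le_divide_eq)
      then show ?thesis by (simp add: exp_minus divide_inverse)
    qed
  qed
  have part2: "GS n f * exp (- \<beta> * real (ud U x)) \<le> exp \<beta> * (GS n f * exp (- \<beta> * real (ud U y)))"
    if x: "x \<in> datasets n" and y: "y \<in> datasets n" and h: "hamming x y = 1" for x y
  proof -
    obtain z where z: "z \<in> U" "ud U x = hamming z x" using ud_in[OF Usub U_ne] by blast
    have "ud U y \<le> hamming z y" using ud_le[OF Usub z(1)] .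
    also have "\<dots> \<le> hamming z x + hamming x y"
      using hamming_tri[of x y z] x y z Usub unfolding datasets_def by auto
    finally have "ud U y \<le> ud U x + 1" using z h by simp
    then have "real (ud U y) \<le> real (ud U x) + 1" by linarith
    then have "\<beta> * real (ud U y) \<le> \<beta> * (real (ud U x) + 1)"
      using beta_pos by (intro mult_left_mono) auto
    then have "- \<beta> * real (ud U x) \<le> \<beta> + - \<beta> * real (ud U y)"
      by (simp add: algebra_simps)
    then have "exp (- \<beta> * real (ud U x)) \<le> exp \<beta> * exp (- \<beta> * real (ud U y))"
      by (simp add: exp_add[symmetric])
    then show ?thesis using GSpos by (simp add: mult.left_commute)
  qed
  show ?thesis unfolding smooth_upper_bound_def using part1 part2 by blast
qed

end
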